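(* Let $\Omega\subset\mathbb{C}$ be a simply connected domain and let $(h,\mathcal{M},\mathcal{N})$ be a Weierstrass data of the second kind on $\Omega$. Define $g:=\frac{1}{h}$ and $\mathcal{P}:=\frac12\mathcal{N}$. Then there exists a $\mathcal{C}^2$ function $\mathcal{Q}:\Omega\to\mathbb{R}$ such that $$\mathcal{Q}_z=h\,\mathcal{M}_z-\frac{h^2}{2}\,\mathcal{N}_z .$$ Moreover, for any such $\mathcal{Q}$, the triple $(g,\mathcal{P},\mathcal{Q})$ is a Weierstrass data of the first kind on $\Omega$, and $$\frac{1}{\overline g}\left(\mathcal{P}_z-|g|^2\mathcal{Q}_z\right)=-\left(\mathcal{M}_z-(\mathrm{Re}\,h)\,\mathcal{N}_z\right).$$
   Context: $\Omega\subset\mathbb{R}^2\equiv\mathbb{C}$ has complex coordinate $z=u+iv$, and $\partial_z=\frac12(\partial_u-i\partial_v)$, $\partial_{\overline z}=\frac12(\partial_u+i\partial_v)$; subscripts denote partial derivatives. A Weierstrass data of the first kind on $\Omega$ is a triple $(g,\mathcal{P},\mathcal{Q})$ where $g:\Omega\to\mathbb{C}\setminus\{0\}$ and $\mathcal{P},\mathcal{Q}:\Omega\to\mathbb{R}$ are $\mathcal{C}^2$, satisfying $g_{\overline z}=0$, $\mathcal{P}_{z\overline z}=|g|^2\mathcal{Q}_{z\overline z}$, and $\mathcal{P}_z-|g|^2\mathcal{Q}_z\neq0$ at every point of $\Omega$. A Weierstrass data of the second kind on $\Omega$ is a triple $(h,\mathcal{M},\mathcal{N})$ where $h:\Omega\to\mathbb{C}\setminus\{0\}$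 and $\mathcal{M},\mathcal{N}:\Omega\to\mathbb{R}$ are $\mathcal{C}^2$, satisfying $h_{\overline z}=0$, $\mathcal{M}_{z\overline z}=(\mathrm{Re}\,h)\,\mathcal{N}_{z\overline z}$, and $\mathcal{M}_z-(\mathrm{Re}\,h)\,\mathcal{N}_z\neq0$ at every point of $\Omega$. *)

theory Defs
  imports "HOL-Analysis.Analysis"
begin

text \<open>Coordinates z = u + i v. Partial derivatives in u and v of a function on
  the plane (values in any real normed vector space), via the Frechet derivative.\<close>

definition pu :: "(complex \<Rightarrow> 'a::real_normed_vector) \<Rightarrow> complex \<Rightarrow> 'a" where
  "pu f z = frechet_derivative f (at z) 1"

definition pv :: "(complex \<Rightarrow> 'a::real_normed_vector) \<Rightarrow> complex \<Rightarrow> 'a" where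
  "pv f z = frechet_derivative f (at z) \<i>"

definition C1_on :: "complex set \<Rightarrow> (complex \<Rightarrow> 'a::real_normed_vector) \<Rightarrow> bool" where
  "C1_on \<Omega> f \<longleftrightarrow> (\<forall>z\<in>\<Omega>. f differentiable (at z))
      \<and> continuous_on \<Omega> (pu f) \<and> continuous_on \<Omega> (pv f)"

definition C2_on :: "complex set \<Rightarrow> (complex \<Rightarrow> 'a::real_normed_vector) \<Rightarrow> bool" where
  "C2_on \<Omega> f \<longleftrightarrow> C1_on \<Omega> f \<and> C1_on \<Omega> (pu f) \<and> C1_on \<Omega> (pv f)"

definition dz :: "(complex \<Rightarrow> complex) \<Rightarrow> complex \<Rightarrow> complex" where
  "dz f z = (pu f z - \<i> * pv f z) / 2"

definition dzbar :: "(complex \<Rightarrow> complex) \<Rightarrow> complex \<Rightarrow> complex" where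
  "dzbar f z = (pu f z + \<i> * pv f z) / 2"

definition cR :: "(complex \<Rightarrow> real) \<Rightarrow> complex \<Rightarrow> complex" where
  "cR f = (\<lambda>z. complex_of_real (f z))"

definition WD1 :: "complex set \<Rightarrow> (complex \<Rightarrow> complex) \<Rightarrow> (complex \<Rightarrow> real) \<Rightarrow> (complex \<Rightarrow> real) \<Rightarrow> bool" where
  "WD1 \<Omega> g P Q \<longleftrightarrow>
     C2_on \<Omega> g \<and> C2_on \<Omega> P \<and> C2_on \<Omega> Q \<and>
     (\<forall>z\<in>\<Omega>. g z \<noteq> 0) \<and>
     (\<forall>z\<in>\<Omega>. dzbar g z = 0) \<and>
     (\<forall>z\<in>\<Omega>. dz (dzbar (cR P)) z = complex_of_real ((cmod (g z))\<^sup>2) * dz (dzbar (cR Q)) z) \<and>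
     (\<forall>z\<in>\<Omega>. dz (cR P) z - complex_of_real ((cmod (g z))\<^sup>2) * dz (cR Q) z \<noteq> 0)"

definition WD2 :: "complex set \<Rightarrow> (complex \<Rightarrow> complex) \<Rightarrow> (complex \<Rightarrow> real) \<Rightarrow> (complex \<Rightarrow> real) \<Rightarrow> bool" where
  "WD2 \<Omega> h M N \<longleftrightarrow>
     C2_on \<Omega> h \<and> C2_on \<Omega> M \<and> C2_on \<Omega> N \<and>
     (\<forall>z\<in>\<Omega>. h z \<noteq> 0) \<and>
     (\<forall>z\<in>\<Omega>. dzbar h z = 0) \<and>
     (\<forall>z\<in>\<Omega>. dz (dzbar (cR M)) z = complex_of_real (Re (h z)) * dz (dzbar (cR N)) z) \<and>
     (\<forall>z\<in>\<Omega>. dz (cR M) z - complex_of_real (Re (h z)) * dz (cR N) z \<noteq> 0)"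

end

theory Submission
  imports Defs "HOL-Complex_Analysis.Complex_Analysis"
begin


definition pd :: "'a::real_normed_vector \<Rightarrow> 'a \<Rightarrow> complex \<Rightarrow> 'a" where
  "pd a b = (\<lambda>k. Re k *\<^sub>R a + Im k *\<^sub>R b)"

lemma bounded_linear_pd[simp]: "bounded_linear (pd a b)"
  unfolding pd_def
  by (intro bounded_linear_add bounded_linear_compose[OF bounded_linear_scaleR_left] bounded_linear_Re bounded_linear_Im)

lemma hd_pd:
  assumes "(f has_derivative D) (at z)"
  shows "D = pd (pu f z) (pv f z)"
proof -
  have l: "linear D" using assms has_derivative_linear by blast
  have e: "D = frechet_derivative f (at z)" using assms frechet_derivative_at by blast
  show ?thesis
  proof
    fix k :: complex
    have "k = Re k *\<^sub>R 1 + Im k *\<^sub>R \<i>" by (simp add: complex_eq_iff)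
    then have "D k = D (Re k *\<^sub>R 1 + Im k *\<^sub>R \<i>)" by simp
    also have "\<dots> = Re k *\<^sub>R D 1 + Im k *\<^sub>R D \<i>"
      using l by (simp add: linear_add linear_scale)
    finally show "D k = pd (pu f z) (pv f z) k" unfolding pd_def pu_def pv_def e by simp
  qed
qed

lemma pd_apply1[simp]: "pd a b 1 = a" and pd_applyi[simp]: "pd a b \<i> = b"
  by (simp_all add: pd_def)

lemma hd_pupv:
  assumes "(f has_derivative pd a b) (at z)"
  shows "pu f z = a" "pv f z = b"
  using hd_pd[OF assms] by (metis pd_apply1 pd_applyi)+

lemma fd_local:
  assumes "open S" "z \<in> S" "\<And>w. w \<in> S \<Longrightarrow> f w = g w"
  shows "frechet_derivative f (at z) = frechet_derivative g (at z)"
proof -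
  have "\<And>D. (f has_derivative D) (at z) \<longleftrightarrow> (g has_derivative D) (at z)"
  proof
    fix D assume "(f has_derivative D) (at z)"
    then show "(g has_derivative D) (at z)"
      by (rule has_derivative_transform_within_open[OF _ assms(1,2)]) (use assms(3) in auto)
  next
    fix D assume "(g has_derivative D) (at z)"
    then show "(f has_derivative D) (at z)"
      by (rule has_derivative_transform_within_open[OF _ assms(1,2)]) (use assms(3) in auto)
  qed
  then show ?thesis unfolding frechet_derivative_def by simp
qed

lemma pupv_local:
  assumes "open S" "z \<in> S" "\<And>w. w \<in> S \<Longrightarrow> f w = g w"
  shows "pu f z = pu g z" "pv f z = pv g z"
  using fd_local[OF assms] by (simp_all add: pu_def pv_def)

lemma C1_crit:
  assumes "open S" "\<And>z. z \<in> S \<Longrightarrow> (f has_derivative pd (a z) (b z)) (at z)"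
    "continuous_on S a" "continuous_on S b"
  shows "C1_on S f" "\<And>z. z \<in> S \<Longrightarrow> pu f z = a z" "\<And>z. z \<in> S \<Longrightarrow> pv f z = b z"
proof -
  have pu: "pu f z = a z" if "z \<in> S" for z by (rule hd_pupv(1)[OF assms(2)[OF that]])
  have pv: "pv f z = b z" if "z \<in> S" for z by (rule hd_pupv(2)[OF assms(2)[OF that]])
  show "z \<in> S \<Longrightarrow> pu f z = a z" for z by (rule pu)
  show "z \<in> S \<Longrightarrow> pv f z = b z" for z by (rule pv)
  have "\<forall>z\<in>S. f differentiable (at z)"
    using assms(2) unfolding differentiable_def by blast
  moreover have "continuous_on S (pu f)"
    using continuous_on_cong[OF refl, of S "pu f" a] pu assms(3) by simp
  moreover have "continuous_on S (pv f)"
    using continuous_on_cong[OF refl, of S "pv f" b] pv assms(4) by simp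
  ultimately show "C1_on S f" unfolding C1_on_def by blast
qed

lemma C1_hd:
  assumes "C1_on S f" "z \<in> S"
  shows "(f has_derivative pd (pu f z) (pv f z)) (at z)"
proof -
  obtain D where D: "(f has_derivative D) (at z)" using assms unfolding C1_on_def differentiable_def by blast
  with hd_pd[OF D] show ?thesis by simp
qed

lemma C1_cong:
  assumes "open S" "C1_on S f" "\<And>w. w \<in> S \<Longrightarrow> f w = g w"
  shows "C1_on S g"
proof -
  have d: "(g has_derivative pd (pu f z) (pv f z)) (at z)" if "z \<in> S" for z
    by (rule has_derivative_transform_within_open[OF C1_hd[OF assms(2) that] assms(1) that]) (rule assms(3))
  have "continuous_on S (pu f)" "continuous_on S (pv f)" using assms(2) unfolding C1_on_def by auto
  then show ?thesis using C1_crit(1)[OF assms(1) d] by blast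
qed

lemma C1_cont: "C1_on S f \<Longrightarrow> continuous_on S f"
  unfolding C1_on_def
  by (intro continuous_at_imp_continuous_on ballI differentiable_imp_continuous_within) auto

lemma field_hd: "(f has_field_derivative c) (at z) \<Longrightarrow> (f has_derivative pd c (\<i> * c)) (at z)"
proof -
  assume "(f has_field_derivative c) (at z)"
  moreover have "(\<lambda>k. k * c) = (*) c" by (rule ext) (simp add: mult.commute)
  ultimately have "(f has_derivative (\<lambda>k. k * c)) (at z)" by (simp add: has_field_derivative_def)
  moreover have "(\<lambda>k. k * c) = pd c (\<i> * c)"
  proof
    fix k :: complex
    have "k = of_real (Re k) + \<i> * of_real (Im k)" by (simp add: complex_eq_iff)
    then have "k * c = (of_real (Re k) + \<i> * of_real (Im k)) * c" by simp
    then have "k * c = of_real (Re k) * c + of_real (Im k) * (\<i> * c)"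
      by (simp add: algebra_simps)
    then show "k * c = pd c (\<i> * c) k" by (simp add: pd_def scaleR_conv_of_real)
  qed
  ultimately show ?thesis by simp
qed

lemma holo_C1:
  assumes "open S" "f holomorphic_on S"
  shows "C1_on S f" "\<And>z. z \<in> S \<Longrightarrow> pu f z = deriv f z" "\<And>z. z \<in> S \<Longrightarrow> pv f z = \<i> * deriv f z"
proof -
  have d: "(f has_derivative pd (deriv f z) (\<i> * deriv f z)) (at z)" if "z \<in> S" for z
    using field_hd holomorphic_derivI[OF assms(2) assms(1) that] by blast
  have c: "continuous_on S (deriv f)"
    using holomorphic_deriv[OF assms(2,1)] holomorphic_on_imp_continuous_on by blast
  have c2: "continuous_on S (\<lambda>z. \<i> * deriv f z)" by (intro continuous_intros c)
  show "C1_on S f" "\<And>z. z \<in> S \<Longrightarrow> pu f z = deriv f z" "\<And>z. z \<in> S \<Longrightarrow> pv f z = \<i> * deriv f z"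
    using C1_crit[OF assms(1) d c c2] by auto
qed

lemma holo_C2:
  assumes "open S" "f holomorphic_on S"
  shows "C2_on S f"
proof -
  have h1: "deriv f holomorphic_on S" using holomorphic_deriv[OF assms(2,1)] .
  have h2: "(\<lambda>z. \<i> * deriv f z) holomorphic_on S" by (intro holomorphic_intros h1)
  have "C1_on S (pu f)"
    by (rule C1_cong[OF assms(1) holo_C1(1)[OF assms(1) h1]]) (simp add: holo_C1(2)[OF assms])
  moreover have "C1_on S (pv f)"
    by (rule C1_cong[OF assms(1) holo_C1(1)[OF assms(1) h2]]) (simp add: holo_C1(3)[OF assms])
  ultimately show ?thesis unfolding C2_on_def using holo_C1(1)[OF assms] by blast
qed

lemma CR_field:
  assumes "(f has_derivative D) (at z)" "dzbar f z = 0"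
  shows "(f has_field_derivative pu f z) (at z)"
proof -
  have D: "D = pd (pu f z) (pv f z)" using hd_pd[OF assms(1)] .
  have "pu f z + \<i> * pv f z = 0" using assms(2) by (simp add: dzbar_def)
  then have "pu f z = - (\<i> * pv f z)" by (simp add: add_eq_0_iff)
  then have b: "pv f z = \<i> * pu f z" by simp
  have "D = (\<lambda>k. k * pu f z)"
  proof
    fix k :: complex
    have "k = of_real (Re k) + \<i> * of_real (Im k)" by (simp add: complex_eq_iff)
    then have "k * pu f z = (of_real (Re k) + \<i> * of_real (Im k)) * pu f z" by simp
    then have "k * pu f z = of_real (Re k) * pu f z + of_real (Im k) * (\<i> * pu f z)"
      by (simp add: algebra_simps)
    then show "D k = k * pu f z" by (simp add: D b pd_def scaleR_conv_of_real)
  qed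
  moreover have "(\<lambda>k. k * pu f z) = (*) (pu f z)" by (rule ext) (simp add: mult.commute)
  ultimately show ?thesis using assms(1) by (simp add: has_field_derivative_def)
qed



lemma line_deriv:
  fixes f :: "complex \<Rightarrow> real"
  assumes "(f has_derivative pd a b) (at (c + of_real s * d))"
  shows "((\<lambda>s. f (c + of_real s * d)) has_real_derivative (pd a b d)) (at s)"
proof -
  have l: "((\<lambda>s::real. c + of_real s * d) has_derivative (\<lambda>x. of_real x * d)) (at s)"
    by (auto intro!: derivative_eq_intros)
  have "((\<lambda>s. f (c + of_real s * d)) has_derivative (\<lambda>x. pd a b (of_real x * d))) (at s)"
    using has_derivative_compose[OF l assms] by simp
  moreover have "(\<lambda>x. pd a b (of_real x * d)) = (\<lambda>x. x * pd a b d)"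
    by (rule ext) (simp add: pd_def algebra_simps)
  moreover have "(\<lambda>x. x * pd a b d) = (*) (pd a b d)" by (rule ext) (simp add: mult.commute)
  ultimately show ?thesis by (simp add: has_field_derivative_def)
qed

lemma line_deriv':
  fixes f :: "complex \<Rightarrow> real"
  assumes "(f has_derivative pd a b) (at w)" "w = c + of_real s * d"
  shows "((\<lambda>s. f (c + of_real s * d)) has_real_derivative (pd a b d)) (at s)"
  using line_deriv assms by blast

lemma schwarz:
  fixes f :: "complex \<Rightarrow> real"
  assumes S: "open S" and C2: "C2_on S f" and z: "z \<in> S"
  shows "pv (pu f) z = pu (pv f) z"
proof (rule ccontr)
  define f1 where "f1 = pu f"
  define f2 where "f2 = pv f"
  define f12 where "f12 = pv f1"
  define f21 where "f21 = pu f2"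
  have C1f: "C1_on S f" and C1f1: "C1_on S f1" and C1f2: "C1_on S f2"
    using C2 unfolding C2_on_def f1_def f2_def by auto
  have df: "w \<in> S \<Longrightarrow> (f has_derivative pd (f1 w) (f2 w)) (at w)" for w
    using C1_hd[OF C1f] unfolding f1_def f2_def by blast
  have df1: "w \<in> S \<Longrightarrow> (f1 has_derivative pd (pu f1 w) (f12 w)) (at w)" for w
    using C1_hd[OF C1f1] unfolding f12_def by blast
  have df2: "w \<in> S \<Longrightarrow> (f2 has_derivative pd (f21 w) (pv f2 w)) (at w)" for w
    using C1_hd[OF C1f2] unfolding f21_def by blast
  have c12: "continuous_on S f12" using C1f1 unfolding C1_on_def f12_def by blast
  have c21: "continuous_on S f21" using C1f2 unfolding C1_on_def f21_def by blast
  assume ne: "pv (pu f) z \<noteq> pu (pv f) z"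
  then have ne': "f12 z \<noteq> f21 z" unfolding f12_def f21_def f1_def f2_def .
  define e where "e = \<bar>f12 z - f21 z\<bar> / 2"
  have e: "e > 0" using ne' by (simp add: e_def)
  obtain d1 where d1: "d1 > 0" "\<And>w. w \<in> S \<Longrightarrow> dist w z < d1 \<Longrightarrow> dist (f12 w) (f12 z) < e"
    using c12 z e unfolding continuous_on_iff by blast
  obtain d2 where d2: "d2 > 0" "\<And>w. w \<in> S \<Longrightarrow> dist w z < d2 \<Longrightarrow> dist (f21 w) (f21 z) < e"
    using c21 z e unfolding continuous_on_iff by blast
  obtain d3 where d3: "d3 > 0" "ball z d3 \<subseteq> S" using S z open_contains_ball by blast
  define d where "d = min d1 (min d2 d3)"
  have d: "d > 0" using d1 d2 d3 by (simp add: d_def)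
  define \<delta> where "\<delta> = d / 3"
  have \<delta>: "\<delta> > 0" using d by (simp add: \<delta>_def)
  have inS: "z + of_real s + \<i> * of_real t \<in> S \<and> dist (z + of_real s + \<i> * of_real t) z < d"
    if "0 \<le> s" "s \<le> \<delta>" "0 \<le> t" "t \<le> \<delta>" for s t
  proof -
    have "cmod (of_real s + \<i> * of_real t) \<le> \<bar>s\<bar> + \<bar>t\<bar>"
      using cmod_le[of "of_real s + \<i> * of_real t"] by simp
    also have "\<dots> \<le> 2 * \<delta>" using that by simp
    also have "\<dots> < d" using d by (simp add: \<delta>_def)
    finally have "cmod (of_real s + \<i> * of_real t) < d" .
    then have "dist (z + of_real s + \<i> * of_real t) z < d" by (simp add: dist_norm)
    moreover then have "z + of_real s + \<i> * of_real t \<in> S"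
      using d3 unfolding d_def by (auto simp: dist_commute subset_iff)
    ultimately show ?thesis by blast
  qed
  define \<Delta> where "\<Delta> = f (z + of_real \<delta> + \<i> * of_real \<delta>) - f (z + of_real \<delta> + \<i> * of_real 0)
     - f (z + of_real 0 + \<i> * of_real \<delta>) + f (z + of_real 0 + \<i> * of_real 0)"
  obtain w1 where w1: "w1 \<in> S" "dist w1 z < d" "\<Delta> = \<delta> * \<delta> * f12 w1"
  proof -
    define \<phi> where "\<phi> s = f (z + \<i> * of_real \<delta> + of_real s * 1) - f (z + \<i> * of_real 0 + of_real s * 1)" for s
    have "\<exists>\<sigma>. 0 < \<sigma> \<and> \<sigma> < \<delta> \<and> \<phi> \<delta> - \<phi> 0 = (\<delta> - 0) * (f1 (z + of_real \<sigma> + \<i> * of_real \<delta>) - f1 (z + of_real \<sigma> + \<i> * of_real 0))"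
    proof (rule MVT2[OF \<delta>])
      fix s assume s: "0 \<le> s" "s \<le> \<delta>"
      have a: "((\<lambda>s. f (z + \<i> * of_real t + of_real s * 1)) has_real_derivative f1 (z + of_real s + \<i> * of_real t)) (at s)"
        if "0 \<le> t" "t \<le> \<delta>" for t
        using line_deriv'[OF df[OF conjunct1[OF inS[OF s that]]], of "z + \<i> * of_real t" s 1] by simp
      show "(\<phi> has_real_derivative (f1 (z + of_real s + \<i> * of_real \<delta>) - f1 (z + of_real s + \<i> * of_real 0))) (at s)"
        unfolding \<phi>_def by (rule DERIV_diff[OF a a]) (use \<delta> in auto)
    qed
    then obtain \<sigma> where \<sigma>: "0 < \<sigma>" "\<sigma> < \<delta>" "\<phi> \<delta> - \<phi> 0 = \<delta> * (f1 (z + of_real \<sigma> + \<i> * of_real \<delta>) - f1 (z + of_real \<sigma> + \<i> * of_real 0))"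
      by auto
    define \<psi> where "\<psi> t = f1 (z + of_real \<sigma> + of_real t * \<i>)" for t
    have "\<exists>\<tau>. 0 < \<tau> \<and> \<tau> < \<delta> \<and> \<psi> \<delta> - \<psi> 0 = (\<delta> - 0) * f12 (z + of_real \<sigma> + \<i> * of_real \<tau>)"
    proof (rule MVT2[OF \<delta>])
      fix t assume t: "0 \<le> t" "t \<le> \<delta>"
      have "z + of_real \<sigma> + \<i> * of_real t \<in> S" using inS[of \<sigma> t] \<sigma> t by auto
      from line_deriv'[OF df1[OF this], of "z + of_real \<sigma>" t "\<i>"]
      show "(\<psi> has_real_derivative f12 (z + of_real \<sigma> + \<i> * of_real t)) (at t)"
        unfolding \<psi>_def by (simp add: mult.commute)
    qed
    then obtain \<tau> where \<tau>: "0 < \<tau>" "\<tau> < \<delta>" "\<psi> \<delta> - \<psi> 0 = \<delta> * f12 (z + of_real \<sigma> + \<i> * of_real \<tau>)"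
      by auto
    show ?thesis
    proof (rule that)
      show "z + of_real \<sigma> + \<i> * of_real \<tau> \<in> S" "dist (z + of_real \<sigma> + \<i> * of_real \<tau>) z < d"
        using inS[of \<sigma> \<tau>] \<sigma> \<tau> by auto
      show "\<Delta> = \<delta> * \<delta> * f12 (z + of_real \<sigma> + \<i> * of_real \<tau>)"
        using \<sigma>(3) \<tau>(3) unfolding \<Delta>_def \<phi>_def \<psi>_def
        by (simp add: algebra_simps)
    qed
  qed
  obtain w2 where w2: "w2 \<in> S" "dist w2 z < d" "\<Delta> = \<delta> * \<delta> * f21 w2"
  proof -
    define \<phi> where "\<phi> t = f (z + of_real \<delta> + of_real t * \<i>) - f (z + of_real 0 + of_real t * \<i>)" for t
    have "\<exists>\<tau>. 0 < \<tau> \<and> \<tau> < \<delta> \<and> \<phi> \<delta> - \<phi> 0 = (\<delta> - 0) * (f2 (z + of_real \<delta> + \<i> * of_real \<tau>) - f2 (z + of_real 0 + \<i> * of_real \<tau>))"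
    proof (rule MVT2[OF \<delta>])
      fix t assume t: "0 \<le> t" "t \<le> \<delta>"
      have a: "((\<lambda>t. f (z + of_real s + of_real t * \<i>)) has_real_derivative f2 (z + of_real s + \<i> * of_real t)) (at t)"
        if "0 \<le> s" "s \<le> \<delta>" for s
        using line_deriv'[OF df[OF conjunct1[OF inS[OF that t]]], of "z + of_real s" t "\<i>"] by (simp add: mult.commute)
      show "(\<phi> has_real_derivative (f2 (z + of_real \<delta> + \<i> * of_real t) - f2 (z + of_real 0 + \<i> * of_real t))) (at t)"
        unfolding \<phi>_def by (rule DERIV_diff[OF a a]) (use \<delta> in auto)
    qed
    then obtain \<tau> where \<tau>: "0 < \<tau>" "\<tau> < \<delta>" "\<phi> \<delta> - \<phi> 0 = \<delta> * (f2 (z + of_real \<delta> + \<i> * of_real \<tau>) - f2 (z + of_real 0 + \<i> * of_real \<tau>))"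
      by auto
    define \<psi> where "\<psi> s = f2 (z + \<i> * of_real \<tau> + of_real s * 1)" for s
    have "\<exists>\<sigma>. 0 < \<sigma> \<and> \<sigma> < \<delta> \<and> \<psi> \<delta> - \<psi> 0 = (\<delta> - 0) * f21 (z + of_real \<sigma> + \<i> * of_real \<tau>)"
    proof (rule MVT2[OF \<delta>])
      fix s assume s: "0 \<le> s" "s \<le> \<delta>"
      have "z + of_real s + \<i> * of_real \<tau> \<in> S" using inS[of s \<tau>] s \<tau> by auto
      from line_deriv'[OF df2[OF this], of "z + \<i> * of_real \<tau>" s 1]
      show "(\<psi> has_real_derivative f21 (z + of_real s + \<i> * of_real \<tau>)) (at s)"
        unfolding \<psi>_def by simp
    qed
    then obtain \<sigma> where \<sigma>: "0 < \<sigma>" "\<sigma> < \<delta>" "\<psi> \<delta> - \<psi> 0 = \<delta> * f21 (z + of_real \<sigma> + \<i> * of_real \<tau>)"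
      by auto
    show ?thesis
    proof (rule that)
      show "z + of_real \<sigma> + \<i> * of_real \<tau> \<in> S" "dist (z + of_real \<sigma> + \<i> * of_real \<tau>) z < d"
        using inS[of \<sigma> \<tau>] \<sigma> \<tau> by auto
      show "\<Delta> = \<delta> * \<delta> * f21 (z + of_real \<sigma> + \<i> * of_real \<tau>)"
        using \<sigma>(3) \<tau>(3) unfolding \<Delta>_def \<phi>_def \<psi>_def
        by (simp add: algebra_simps)
    qed
  qed
  have "f12 w1 = f21 w2" using w1(3) w2(3) \<delta> by simp
  moreover have "dist (f12 w1) (f12 z) < e" using d1(2)[OF w1(1)] w1(2) by (simp add: d_def)
  moreover have "dist (f21 w2) (f21 z) < e" using d2(2)[OF w2(1)] w2(2) by (simp add: d_def)
  ultimately have "\<bar>f12 z - f21 z\<bar> < 2 * e" by (simp add: dist_real_def)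
  then show False by (simp add: e_def)
qed




definition bRe :: "complex \<Rightarrow>\<^sub>L real" where "bRe = Blinfun Re"
definition bIm :: "complex \<Rightarrow>\<^sub>L real" where "bIm = Blinfun Im"

lemma bRe_apply[simp]: "blinfun_apply bRe k = Re k"
  unfolding bRe_def using bounded_linear_Blinfun_apply[OF bounded_linear_Re] by simp
lemma bIm_apply[simp]: "blinfun_apply bIm k = Im k"
  unfolding bIm_def using bounded_linear_Blinfun_apply[OF bounded_linear_Im] by simp

lemma closed_sym:
  assumes "Im F1 + Re F2 = 0"
  shows "Re ((of_real (Re k) * F1 + of_real (Im k) * F2) * w) = Re ((of_real (Re w) * F1 + of_real (Im w) * F2) * k)"
proof -
  have "Re F2 = - Im F1" using assms by simp
  then show ?thesis by (simp add: algebra_simps)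
qed

lemma poincare_convex:
  fixes F :: "complex \<Rightarrow> complex"
  assumes S: "open S" "convex S" "a \<in> S"
   and dF: "\<And>z. z \<in> S \<Longrightarrow> (F has_derivative pd (F1 z) (F2 z)) (at z)"
   and c1: "continuous_on S F1" and c2: "continuous_on S F2"
   and cl: "\<And>z. z \<in> S \<Longrightarrow> Im (F1 z) + Re (F2 z) = 0"
  shows "\<exists>Q. \<forall>z\<in>S. (Q has_derivative (\<lambda>k. 2 * Re (F z * k))) (at z)"
proof -
  define y where "y x t = a + of_real t * (x - a)" for x t
  have yS: "y x t \<in> S" if "x \<in> S" "t \<in> {0..1}" for x t
  proof -
    have "y x t = (1 - t) *\<^sub>R a + t *\<^sub>R x" by (simp add: y_def scaleR_conv_of_real algebra_simps)
    then show ?thesis using S(2,3) that convexD_alt by fastforce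
  qed
  define f where "f x t = 2 * Re (F (y x t) * (x - a))" for x t
  define A1 where "A1 x t = 2 * Re (of_real t * F1 (y x t) * (x - a) + F (y x t))" for x t
  define A2 where "A2 x t = 2 * Re (of_real t * F2 (y x t) * (x - a) + \<i> * F (y x t))" for x t
  define fx where "fx x t = A1 x t *\<^sub>R bRe + A2 x t *\<^sub>R bIm" for x t
  have fx_apply: "blinfun_apply (fx x t) k = A1 x t * Re k + A2 x t * Im k" for x t k
    by (simp add: fx_def blinfun.scaleR_left blinfun.add_left)
  have cF: "continuous_on S F"
    using dF by (meson continuous_at_imp_continuous_on has_derivative_continuous)
  have cy: "continuous_on (S \<times> {0..1}) (\<lambda>(x, t). y x t)"
    unfolding y_def by (simp add: split_beta) (intro continuous_intros)
  have yS': "(\<lambda>(x, t). y x t) ` (S \<times> {0..1}) \<subseteq> S" using yS by auto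
  have cFy: "continuous_on (S \<times> {0..1}) (\<lambda>(x, t). F (y x t))"
    using continuous_on_compose2[OF cF cy yS'] by (simp add: split_beta)
  have cF1y: "continuous_on (S \<times> {0..1}) (\<lambda>(x, t). F1 (y x t))"
    using continuous_on_compose2[OF c1 cy yS'] by (simp add: split_beta)
  have cF2y: "continuous_on (S \<times> {0..1}) (\<lambda>(x, t). F2 (y x t))"
    using continuous_on_compose2[OF c2 cy yS'] by (simp add: split_beta)
  have cA1: "continuous_on (S \<times> {0..1}) (\<lambda>(x, t). A1 x t)"
    unfolding A1_def using cFy cF1y
    by (simp add: split_beta) (intro continuous_intros; simp add: split_beta)
  have cA2: "continuous_on (S \<times> {0..1}) (\<lambda>(x, t). A2 x t)"
    unfolding A2_def using cFy cF2y
    by (simp add: split_beta) (intro continuous_intros; simp add: split_beta)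
  have cfx: "continuous_on (S \<times> cbox 0 1) (\<lambda>(x, t). fx x t)"
    unfolding fx_def using cA1 cA2 by (simp add: split_beta) (intro continuous_intros; simp add: split_beta)
  have dfx: "((\<lambda>x. f x t) has_derivative blinfun_apply (fx x t)) (at x within S)"
    if x: "x \<in> S" and t: "t \<in> cbox 0 1" for x t
  proof -
    have t': "t \<in> {0..1}" using t by simp
    have dy: "((\<lambda>x. y x t) has_derivative (\<lambda>k. of_real t * k)) (at x)"
      unfolding y_def by (auto intro!: derivative_eq_intros)
    have dFy: "((\<lambda>x. F (y x t)) has_derivative (\<lambda>k. pd (F1 (y x t)) (F2 (y x t)) (of_real t * k))) (at x)"
      using has_derivative_compose[OF dy dF[OF yS[OF x t']]] by simp
    have dP: "((\<lambda>x. F (y x t) * (x - a)) has_derivative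
        (\<lambda>k. F (y x t) * (k - 0) + pd (F1 (y x t)) (F2 (y x t)) (of_real t * k) * (x - a))) (at x)"
      by (rule has_derivative_mult[OF dFy has_derivative_diff[OF has_derivative_ident has_derivative_const]])
    have dR: "((\<lambda>x. 2 * Re (F (y x t) * (x - a))) has_derivative
        (\<lambda>k. 2 * Re (F (y x t) * (k - 0) + pd (F1 (y x t)) (F2 (y x t)) (of_real t * k) * (x - a)))) (at x)"
      using has_derivative_mult_right[OF bounded_linear.has_derivative[OF bounded_linear_Re dP], of 2] .
    have eq: "(\<lambda>k. 2 * Re (F (y x t) * (k - 0) + pd (F1 (y x t)) (F2 (y x t)) (of_real t * k) * (x - a)))
        = blinfun_apply (fx x t)"
    proof
      fix k :: complex
      have kk: "k = of_real (Re k) + \<i> * of_real (Im k)" by (simp add: complex_eq_iff)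
      show "2 * Re (F (y x t) * (k - 0) + pd (F1 (y x t)) (F2 (y x t)) (of_real t * k) * (x - a)) = blinfun_apply (fx x t) k"
        unfolding fx_apply A1_def A2_def pd_def
        by (subst (1) kk) (simp add: algebra_simps)
    qed
    show ?thesis using dR unfolding eq f_def by (rule has_derivative_at_withinI)
  qed
  have intf: "f x integrable_on cbox 0 1" if "x \<in> S" for x
  proof -
    have "continuous_on (cbox 0 1) (\<lambda>t. y x t)" unfolding y_def by (intro continuous_intros)
    moreover have "(\<lambda>t. y x t) ` cbox 0 1 \<subseteq> S" using yS[OF that] by auto
    ultimately have "continuous_on (cbox 0 1) (\<lambda>t. F (y x t))" using continuous_on_compose2[OF cF] by blast
    then have "continuous_on (cbox 0 1) (f x)" unfolding f_def by (intro continuous_intros)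
    then show ?thesis by (rule integrable_continuous)
  qed
  define Q where "Q x = integral (cbox 0 1) (f x)" for x
  show ?thesis
  proof (intro exI ballI)
    fix x0 assume x0: "x0 \<in> S"
    have L: "(Q has_derivative blinfun_apply (integral (cbox 0 1) (fx x0))) (at x0 within S)"
      unfolding Q_def
      by (rule leibniz_rule[OF dfx intf cfx x0 S(2)])
    have L': "(Q has_derivative blinfun_apply (integral (cbox 0 1) (fx x0))) (at x0)"
      using L at_within_open[OF x0 S(1)] by simp
    have intfx: "fx x0 integrable_on cbox 0 1"
    proof -
      have "continuous_on ((\<lambda>t. (x0, t)) ` cbox 0 1) (\<lambda>(x, t). fx x t)"
        by (rule continuous_on_subset[OF cfx]) (use x0 in auto)
      then have "continuous_on (cbox 0 1) (\<lambda>t. fx x0 t)"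
        using continuous_on_compose[of "cbox 0 1" "\<lambda>t. (x0, t)" "\<lambda>(x, t). fx x t"]
        by (simp add: o_def continuous_intros)
      then show ?thesis by (rule integrable_continuous)
    qed
    have ev: "blinfun_apply (integral (cbox 0 1) (fx x0)) k = 2 * Re (F x0 * k)" for k
    proof -
      define g where "g t = t * (2 * Re (F (y x0 t) * k))" for t
      have dg: "(g has_real_derivative blinfun_apply (fx x0 t) k) (at t within {0..1})" if t: "t \<in> {0..1}" for t
      proof -
        have dy: "((\<lambda>t. y x0 t) has_derivative (\<lambda>s. of_real s * (x0 - a))) (at t)"
          unfolding y_def by (auto intro!: derivative_eq_intros)
        have dFy: "((\<lambda>t. F (y x0 t)) has_derivative (\<lambda>s. pd (F1 (y x0 t)) (F2 (y x0 t)) (of_real s * (x0 - a)))) (at t)"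
          using has_derivative_compose[OF dy dF[OF yS[OF x0 t]]] by simp
        have d2: "((\<lambda>t. 2 * Re (F (y x0 t) * k)) has_derivative (\<lambda>s. 2 * Re (pd (F1 (y x0 t)) (F2 (y x0 t)) (of_real s * (x0 - a)) * k))) (at t)"
          using has_derivative_mult_right[OF bounded_linear.has_derivative[OF bounded_linear_Re has_derivative_mult_left[OF dFy, of k]], of 2] .
        have d3: "(g has_derivative (\<lambda>s. t * (2 * Re (pd (F1 (y x0 t)) (F2 (y x0 t)) (of_real s * (x0 - a)) * k)) + s * (2 * Re (F (y x0 t) * k)))) (at t)"
          unfolding g_def using has_derivative_mult[OF has_derivative_ident d2] by simp
        have eq: "(\<lambda>s. t * (2 * Re (pd (F1 (y x0 t)) (F2 (y x0 t)) (of_real s * (x0 - a)) * k)) + s * (2 * Re (F (y x0 t) * k)))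
            = (\<lambda>s. s * blinfun_apply (fx x0 t) k)"
        proof
          fix s :: real
          have cs: "Re ((of_real (Re k) * F1 (y x0 t) + of_real (Im k) * F2 (y x0 t)) * (x0 - a)) = Re ((of_real (Re (x0 - a)) * F1 (y x0 t) + of_real (Im (x0 - a)) * F2 (y x0 t)) * k)"
            by (rule closed_sym[OF cl[OF yS[OF x0 t]]])
          have kk: "k = of_real (Re k) + \<i> * of_real (Im k)" by (simp add: complex_eq_iff)
          have "blinfun_apply (fx x0 t) k = 2 * Re (of_real t * ((of_real (Re k) * F1 (y x0 t) + of_real (Im k) * F2 (y x0 t)) * (x0 - a)) + F (y x0 t) * k)"
            unfolding fx_apply A1_def A2_def by (subst (3) kk) (simp add: algebra_simps)
          also have "\<dots> = 2 * t * Re ((of_real (Re k) * F1 (y x0 t) + of_real (Im k) * F2 (y x0 t)) * (x0 - a)) + 2 * Re (F (y x0 t) * k)"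
            by simp
          finally have "blinfun_apply (fx x0 t) k = 2 * t * Re ((of_real (Re (x0 - a)) * F1 (y x0 t) + of_real (Im (x0 - a)) * F2 (y x0 t)) * k) + 2 * Re (F (y x0 t) * k)"
            using cs by simp
          note h = this
          show "t * (2 * Re (pd (F1 (y x0 t)) (F2 (y x0 t)) (of_real s * (x0 - a)) * k)) + s * (2 * Re (F (y x0 t) * k)) = s * blinfun_apply (fx x0 t) k"
            unfolding h by (simp add: pd_def scaleR_conv_of_real algebra_simps)
        qed
        show ?thesis using d3 unfolding eq has_field_derivative_def
          by (simp add: mult.commute[of _ "blinfun_apply (fx x0 t) k"] has_derivative_at_withinI)
      qed
      have "((\<lambda>t. blinfun_apply (fx x0 t) k) has_integral (g 1 - g 0)) {0..1}"
        by (rule fundamental_theorem_of_calculus) (use dg in \<open>auto simp: has_real_derivative_iff_has_vector_derivative\<close>)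
      then have "integral {0..1} (\<lambda>t. blinfun_apply (fx x0 t) k) = 2 * Re (F x0 * k)"
        by (simp add: g_def y_def integral_unique)
      then show ?thesis using blinfun_apply_integral[OF intfx] by simp
    qed
    show "(Q has_derivative (\<lambda>k. 2 * Re (F x0 * k))) (at x0)"
      using L' ev by (metis (no_types, lifting) ext)
  qed
qed




lemma hd_pd':
  assumes "(f has_derivative D) (at z)"
  shows "(f has_derivative pd (D 1) (D \<i>)) (at z)"
proof -
  have "D = pd (D 1) (D \<i>)" using hd_pd[OF assms] by simp
  then show ?thesis using assms by simp
qed

lemma poincare_sc:
  fixes F :: "complex \<Rightarrow> complex"
  assumes S: "open S" "simply_connected S"
   and dF: "\<And>z. z \<in> S \<Longrightarrow> (F has_derivative pd (F1 z) (F2 z)) (at z)"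
   and c1: "continuous_on S F1" and c2: "continuous_on S F2"
   and cl: "\<And>z. z \<in> S \<Longrightarrow> Im (F1 z) + Re (F2 z) = 0"
  shows "\<exists>Q. \<forall>z\<in>S. (Q has_derivative (\<lambda>k. 2 * Re (F z * k))) (at z)"
proof -
  consider "S = {}" | "S = UNIV" | "\<exists>f g. f holomorphic_on S \<and> g holomorphic_on ball 0 1 \<and>
                 (\<forall>z \<in> S. f z \<in> ball 0 1 \<and> g(f z) = z) \<and>
                 (\<forall>z \<in> ball 0 1. g z \<in> S \<and> f(g z) = z)"
    using S simply_connected_eq_biholomorphic_to_disc by blast
  then show ?thesis
  proof cases
    case 1 then show ?thesis by simp
  next
    case 2
    show ?thesis using poincare_convex[of S 0 F F1 F2] S dF c1 c2 cl 2 by simp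
  next
    case 3
    then obtain \<psi> \<phi> where hpsi: "\<psi> holomorphic_on S" and hphi: "\<phi> holomorphic_on ball 0 1"
      and psiS: "\<And>z. z \<in> S \<Longrightarrow> \<psi> z \<in> ball 0 1 \<and> \<phi> (\<psi> z) = z"
      and phiB: "\<And>w. w \<in> ball 0 1 \<Longrightarrow> \<phi> w \<in> S \<and> \<psi> (\<phi> w) = w" by blast
    define B :: "complex set" where "B = ball 0 1"
    have B: "open B" "convex B" "0 \<in> B" by (auto simp: B_def)
    have hphi': "\<phi> holomorphic_on B" using hphi by (simp add: B_def)
    have hdphi: "deriv \<phi> holomorphic_on B" using holomorphic_deriv[OF hphi' B(1)] .
    have hddphi: "deriv (deriv \<phi>) holomorphic_on B" using holomorphic_deriv[OF hdphi B(1)] .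
    define G where "G w = F (\<phi> w) * deriv \<phi> w" for w
    define D where "D w = (\<lambda>k. F (\<phi> w) * (deriv (deriv \<phi>) w * k) + pd (F1 (\<phi> w)) (F2 (\<phi> w)) (deriv \<phi> w * k) * deriv \<phi> w)" for w
    have dG: "(G has_derivative D w) (at w)" if w: "w \<in> B" for w
    proof -
      have phiw: "\<phi> w \<in> S" using phiB w by (simp add: B_def)
      have d1: "(\<phi> has_derivative (*) (deriv \<phi> w)) (at w)"
        using holomorphic_derivI[OF hphi' B(1) w] by (simp add: has_field_derivative_def)
      have d2: "(deriv \<phi> has_derivative (*) (deriv (deriv \<phi>) w)) (at w)"
        using holomorphic_derivI[OF hdphi B(1) w] by (simp add: has_field_derivative_def)
      have d3: "((\<lambda>w. F (\<phi> w)) has_derivative (\<lambda>k. pd (F1 (\<phi> w)) (F2 (\<phi> w)) (deriv \<phi> w * k))) (at w)"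
        using has_derivative_compose[OF d1 dF[OF phiw]] by simp
      show ?thesis unfolding G_def D_def using has_derivative_mult[OF d3 d2] by simp
    qed
    define G1 where "G1 w = D w 1" for w
    define G2 where "G2 w = D w \<i>" for w
    have dG': "w \<in> B \<Longrightarrow> (G has_derivative pd (G1 w) (G2 w)) (at w)" for w
      unfolding G1_def G2_def by (rule hd_pd'[OF dG])
    have cphi: "continuous_on B \<phi>" using hphi' holomorphic_on_imp_continuous_on by blast
    have cdphi: "continuous_on B (deriv \<phi>)" using hdphi holomorphic_on_imp_continuous_on by blast
    have cddphi: "continuous_on B (deriv (deriv \<phi>))" using hddphi holomorphic_on_imp_continuous_on by blast
    have phiB': "\<phi> ` B \<subseteq> S" using phiB by (auto simp: B_def)
    have cF: "continuous_on S F"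
      using dF by (meson continuous_at_imp_continuous_on has_derivative_continuous)
    have cFphi: "continuous_on B (\<lambda>w. F (\<phi> w))" using continuous_on_compose2[OF cF cphi phiB'] .
    have cF1phi: "continuous_on B (\<lambda>w. F1 (\<phi> w))" using continuous_on_compose2[OF c1 cphi phiB'] .
    have cF2phi: "continuous_on B (\<lambda>w. F2 (\<phi> w))" using continuous_on_compose2[OF c2 cphi phiB'] .
    have cG1: "continuous_on B G1" unfolding G1_def D_def pd_def
      by (intro continuous_intros cFphi cF1phi cF2phi cdphi cddphi)
    have cG2: "continuous_on B G2" unfolding G2_def D_def pd_def
      by (intro continuous_intros cFphi cF1phi cF2phi cdphi cddphi)
    have clG: "Im (G1 w) + Re (G2 w) = 0" if w: "w \<in> B" for w
    proof -
      have phiw: "\<phi> w \<in> S" using phiB w by (simp add: B_def)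
      have e: "Re (F2 (\<phi> w)) = - Im (F1 (\<phi> w))" using cl[OF phiw] by simp
      show ?thesis unfolding G1_def G2_def D_def pd_def
        by (simp add: algebra_simps e)
    qed
    obtain Q0 where Q0: "\<And>w. w \<in> B \<Longrightarrow> (Q0 has_derivative (\<lambda>k. 2 * Re (G w * k))) (at w)"
      using poincare_convex[OF B dG' cG1 cG2 clG] by blast
    show ?thesis
    proof (intro exI ballI)
      fix z assume z: "z \<in> S"
      have pz: "\<psi> z \<in> B" using psiS z by (simp add: B_def)
      have dpsi: "(\<psi> has_field_derivative deriv \<psi> z) (at z)" using holomorphic_derivI[OF hpsi S(1) z] .
      have dphi: "(\<phi> has_field_derivative deriv \<phi> (\<psi> z)) (at (\<psi> z))" using holomorphic_derivI[OF hphi' B(1) pz] .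
      have "((\<lambda>x. \<phi> (\<psi> x)) has_field_derivative deriv \<phi> (\<psi> z) * deriv \<psi> z) (at z)"
        using DERIV_chain'[OF dpsi dphi] .
      moreover have "((\<lambda>x. \<phi> (\<psi> x)) has_field_derivative 1) (at z)"
        by (rule has_field_derivative_transform_within_open[OF DERIV_ident S(1) z]) (simp add: psiS)
      ultimately have one: "deriv \<phi> (\<psi> z) * deriv \<psi> z = 1" using DERIV_unique by blast
      have dpsi': "(\<psi> has_derivative (\<lambda>k. deriv \<psi> z * k)) (at z)"
        using dpsi by (simp add: has_field_derivative_def)
      have "((\<lambda>x. Q0 (\<psi> x)) has_derivative (\<lambda>k. 2 * Re (G (\<psi> z) * (deriv \<psi> z * k)))) (at z)"
        using has_derivative_compose[OF dpsi' Q0[OF pz]] by simp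
      moreover have "(\<lambda>k. 2 * Re (G (\<psi> z) * (deriv \<psi> z * k))) = (\<lambda>k. 2 * Re (F z * k))"
      proof
        fix k
        have "G (\<psi> z) * (deriv \<psi> z * k) = F z * (deriv \<phi> (\<psi> z) * deriv \<psi> z) * k"
          unfolding G_def using psiS[OF z] by (simp add: algebra_simps)
        also have "\<dots> = F z * k" using one by simp
        finally have e: "G (\<psi> z) * (deriv \<psi> z * k) = F z * k" .
        show "2 * Re (G (\<psi> z) * (deriv \<psi> z * k)) = 2 * Re (F z * k)" by (simp only: e)
      qed
      ultimately show "((\<lambda>x. Q0 (\<psi> x)) has_derivative (\<lambda>k. 2 * Re (F z * k))) (at z)" by simp
    qed
  qed
qed




lemma pd_of_real: "pd (of_real a) (of_real b) k = of_real (pd a b k)"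
  by (simp add: pd_def scaleR_conv_of_real)

lemma cR_hd:
  assumes "(f has_derivative pd a b) (at z)"
  shows "(cR f has_derivative pd (of_real a) (of_real b)) (at z)"
proof -
  have "((\<lambda>w. of_real (f w) :: complex) has_derivative (\<lambda>k. of_real (pd a b k))) (at z)"
    using bounded_linear.has_derivative[OF bounded_linear_of_real assms] .
  moreover have "(\<lambda>k. of_real (pd a b k) :: complex) = pd (of_real a) (of_real b)"
    by (rule ext) (simp add: pd_of_real)
  ultimately show ?thesis unfolding cR_def by simp
qed

lemma dz_real:
  assumes "(f has_derivative pd a b) (at z)"
  shows "dz (cR f) z = (of_real a - \<i> * of_real b) / 2" "dzbar (cR f) z = (of_real a + \<i> * of_real b) / 2"
  using hd_pupv[OF cR_hd[OF assms]] by (simp_all add: dz_def dzbar_def)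

lemma comb_hd:
  fixes p q :: "complex \<Rightarrow> real" and s :: complex
  assumes "(p has_derivative pd a b) (at z)" "(q has_derivative pd c d) (at z)"
  shows "((\<lambda>w. (of_real (p w) + s * of_real (q w)) / 2) has_derivative
           pd ((of_real a + s * of_real c) / 2) ((of_real b + s * of_real d) / 2)) (at z)"
proof -
  have p: "((\<lambda>w. of_real (p w) :: complex) has_derivative pd (of_real a) (of_real b)) (at z)"
    using cR_hd[OF assms(1)] unfolding cR_def .
  have q: "((\<lambda>w. of_real (q w) :: complex) has_derivative pd (of_real c) (of_real d)) (at z)"
    using cR_hd[OF assms(2)] unfolding cR_def .
  have "((\<lambda>w. (of_real (p w) + s * of_real (q w)) / 2) has_derivative
     (\<lambda>k. (pd (of_real a) (of_real b) k + s * pd (of_real c) (of_real d) k) / 2)) (at z)"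
    using bounded_linear.has_derivative[OF bounded_linear_divide[of 2] has_derivative_add[OF p has_derivative_mult_right[OF q, of s]]] .
  moreover have "(\<lambda>k. (pd (of_real a) (of_real b) k + s * pd (of_real c) (of_real d) k) / 2)
      = pd ((of_real a + s * of_real c) / 2) ((of_real b + s * of_real d) / 2)"
    by (rule ext) (simp add: pd_def scaleR_conv_of_real algebra_simps add_divide_distrib)
  ultimately show ?thesis by simp
qed

lemma C2_real:
  fixes f :: "complex \<Rightarrow> real"
  assumes S: "open S" and C2: "C2_on S f" and z: "z \<in> S"
  shows "(dz (cR f) has_derivative pd ((of_real (pu (pu f) z) + (- \<i>) * of_real (pu (pv f) z)) / 2)
                                      ((of_real (pv (pu f) z) + (- \<i>) * of_real (pv (pv f) z)) / 2)) (at z)"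
    and "(dzbar (cR f) has_derivative pd ((of_real (pu (pu f) z) + \<i> * of_real (pu (pv f) z)) / 2)
                                      ((of_real (pv (pu f) z) + \<i> * of_real (pv (pv f) z)) / 2)) (at z)"
    and "dz (dzbar (cR f)) z = of_real ((pu (pu f) z + pv (pv f) z) / 4)"
    and "dzbar (dz (cR f)) z = of_real ((pu (pu f) z + pv (pv f) z) / 4)"
proof -
  have C1f: "C1_on S f" and C1f1: "C1_on S (pu f)" and C1f2: "C1_on S (pv f)"
    using C2 unfolding C2_on_def by auto
  have eq1: "dz (cR f) w = (of_real (pu f w) + (- \<i>) * of_real (pv f w)) / 2" if "w \<in> S" for w
    using dz_real(1)[OF C1_hd[OF C1f that]] by simp
  have eq2: "dzbar (cR f) w = (of_real (pu f w) + \<i> * of_real (pv f w)) / 2" if "w \<in> S" for w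
    using dz_real(2)[OF C1_hd[OF C1f that]] by simp
  show d1: "(dz (cR f) has_derivative pd ((of_real (pu (pu f) z) + (- \<i>) * of_real (pu (pv f) z)) / 2)
                                      ((of_real (pv (pu f) z) + (- \<i>) * of_real (pv (pv f) z)) / 2)) (at z)"
    by (rule has_derivative_transform_within_open[OF comb_hd[OF C1_hd[OF C1f1 z] C1_hd[OF C1f2 z]] S z])
       (simp add: eq1)
  show d2: "(dzbar (cR f) has_derivative pd ((of_real (pu (pu f) z) + \<i> * of_real (pu (pv f) z)) / 2)
                                      ((of_real (pv (pu f) z) + \<i> * of_real (pv (pv f) z)) / 2)) (at z)"
    by (rule has_derivative_transform_within_open[OF comb_hd[OF C1_hd[OF C1f1 z] C1_hd[OF C1f2 z]] S z])
       (simp add: eq2)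
  have sw: "pv (pu f) z = pu (pv f) z" by (rule schwarz[OF S C2 z])
  show "dz (dzbar (cR f)) z = of_real ((pu (pu f) z + pv (pv f) z) / 4)"
    unfolding dz_def hd_pupv[OF d2] sw by (simp add: complex_eq_iff)
  show "dzbar (dz (cR f)) z = of_real ((pu (pu f) z + pv (pv f) z) / 4)"
    unfolding dzbar_def hd_pupv[OF d1] sw by (simp add: complex_eq_iff)
qed

lemma C2_real_cont:
  fixes f :: "complex \<Rightarrow> real"
  assumes "C2_on S f"
  shows "continuous_on S (pu f)" "continuous_on S (pv f)" "continuous_on S (pu (pu f))"
    "continuous_on S (pv (pu f))" "continuous_on S (pu (pv f))" "continuous_on S (pv (pv f))"
  using assms unfolding C2_on_def C1_on_def by auto

lemma half_hd:
  fixes f :: "complex \<Rightarrow> real"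
  assumes "(f has_derivative pd a b) (at z)"
  shows "((\<lambda>w. f w / 2) has_derivative pd (a / 2) (b / 2)) (at z)"
proof -
  have "((\<lambda>w. f w / 2) has_derivative (\<lambda>k. pd a b k / 2)) (at z)"
    using bounded_linear.has_derivative[OF bounded_linear_divide[of 2] assms] .
  moreover have "(\<lambda>k. pd a b k / 2) = pd (a / 2) (b / 2)" by (rule ext) (simp add: pd_def add_divide_distrib)
  ultimately show ?thesis by simp
qed

lemma half_C1:
  fixes f :: "complex \<Rightarrow> real"
  assumes S: "open S" and "C1_on S f"
  shows "C1_on S (\<lambda>w. f w / 2)" "\<And>z. z \<in> S \<Longrightarrow> pu (\<lambda>w. f w / 2) z = pu f z / 2"
    "\<And>z. z \<in> S \<Longrightarrow> pv (\<lambda>w. f w / 2) z = pv f z / 2"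
proof -
  have c: "continuous_on S (\<lambda>z. pu f z / 2)" "continuous_on S (\<lambda>z. pv f z / 2)"
    using assms(2) unfolding C1_on_def by (auto intro!: continuous_intros)
  show "C1_on S (\<lambda>w. f w / 2)" "\<And>z. z \<in> S \<Longrightarrow> pu (\<lambda>w. f w / 2) z = pu f z / 2"
    "\<And>z. z \<in> S \<Longrightarrow> pv (\<lambda>w. f w / 2) z = pv f z / 2"
    using C1_crit[OF S half_hd[OF C1_hd[OF assms(2)]] c] by auto
qed

lemma half_C2:
  fixes f :: "complex \<Rightarrow> real"
  assumes S: "open S" and C2: "C2_on S f"
  shows "C2_on S (\<lambda>w. f w / 2)"
    "\<And>z. z \<in> S \<Longrightarrow> pu (pu (\<lambda>w. f w / 2)) z = pu (pu f) z / 2"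
    "\<And>z. z \<in> S \<Longrightarrow> pv (pv (\<lambda>w. f w / 2)) z = pv (pv f) z / 2"
proof -
  have C1f: "C1_on S f" and C1f1: "C1_on S (pu f)" and C1f2: "C1_on S (pv f)"
    using C2 unfolding C2_on_def by auto
  note h = half_C1[OF S C1f]
  note h1 = half_C1[OF S C1f1]
  note h2 = half_C1[OF S C1f2]
  have a: "C1_on S (pu (\<lambda>w. f w / 2))" by (rule C1_cong[OF S h1(1)]) (simp add: h(2))
  have b: "C1_on S (pv (\<lambda>w. f w / 2))" by (rule C1_cong[OF S h2(1)]) (simp add: h(3))
  show "C2_on S (\<lambda>w. f w / 2)" unfolding C2_on_def using h(1) a b by blast
  show "z \<in> S \<Longrightarrow> pu (pu (\<lambda>w. f w / 2)) z = pu (pu f) z / 2" for z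
    using pupv_local(1)[OF S _ h(2), of z] h1(2) by simp
  show "z \<in> S \<Longrightarrow> pv (pv (\<lambda>w. f w / 2)) z = pv (pv f) z / 2" for z
    using pupv_local(2)[OF S _ h(3), of z] h2(3) by simp
qed




lemma Re_hd:
  assumes "(F has_derivative pd a b) (at z)"
  shows "((\<lambda>w. c * Re (F w)) has_derivative pd (c * Re a) (c * Re b)) (at z)"
    "((\<lambda>w. c * Im (F w)) has_derivative pd (c * Im a) (c * Im b)) (at z)"
proof -
  have "((\<lambda>w. c * Re (F w)) has_derivative (\<lambda>k. c * Re (pd a b k))) (at z)"
    using has_derivative_mult_right[OF bounded_linear.has_derivative[OF bounded_linear_Re assms]] .
  moreover have "(\<lambda>k. c * Re (pd a b k)) = pd (c * Re a) (c * Re b)"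
    by (rule ext) (simp add: pd_def algebra_simps)
  ultimately show "((\<lambda>w. c * Re (F w)) has_derivative pd (c * Re a) (c * Re b)) (at z)" by simp
  have "((\<lambda>w. c * Im (F w)) has_derivative (\<lambda>k. c * Im (pd a b k))) (at z)"
    using has_derivative_mult_right[OF bounded_linear.has_derivative[OF bounded_linear_Im assms]] .
  moreover have "(\<lambda>k. c * Im (pd a b k)) = pd (c * Im a) (c * Im b)"
    by (rule ext) (simp add: pd_def algebra_simps)
  ultimately show "((\<lambda>w. c * Im (F w)) has_derivative pd (c * Im a) (c * Im b)) (at z)" by simp
qed

lemma cnj_hd:
  assumes "(F has_derivative pd a b) (at z)"
  shows "((\<lambda>w. cnj (F w)) has_derivative pd (cnj a) (cnj b)) (at z)"
proof -
  have "((\<lambda>w. cnj (F w)) has_derivative (\<lambda>k. cnj (pd a b k))) (at z)"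
    using bounded_linear.has_derivative[OF bounded_linear_cnj assms] .
  moreover have "(\<lambda>k. cnj (pd a b k)) = pd (cnj a) (cnj b)"
    by (rule ext) (simp add: pd_def scaleR_conv_of_real)
  ultimately show ?thesis by simp
qed

lemma alg_id:
  assumes hz: "hz \<noteq> 0"
  shows "1 / cnj (1 / hz) * (Nz / 2 - complex_of_real ((cmod (1 / hz))\<^sup>2) * (hz * Mz - hz\<^sup>2 / 2 * Nz))
     = - (Mz - complex_of_real (Re hz) * Nz)"
proof -
  have c1: "complex_of_real ((cmod (1 / hz))\<^sup>2) = 1 / (hz * cnj hz)"
    using complex_norm_square[of "1 / hz"] by simp
  have c2: "complex_of_real (Re hz) = (hz + cnj hz) / 2"
    using complex_add_cnj[of hz] by simp
  have c3: "cnj hz \<noteq> 0" using hz by simp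
  show ?thesis unfolding c1 c2 using hz c3 by (simp add: field_simps power2_eq_square)
qed

theorem mainTheorem2:
  fixes \<Omega> :: "complex set" and h :: "complex \<Rightarrow> complex" and M N :: "complex \<Rightarrow> real"
  assumes "open \<Omega>" and "connected \<Omega>" and "simply_connected \<Omega>"
    and "WD2 \<Omega> h M N"
  shows "(\<exists>Q :: complex \<Rightarrow> real. C2_on \<Omega> Q \<and>
            (\<forall>z\<in>\<Omega>. dz (cR Q) z = h z * dz (cR M) z - (h z)\<^sup>2 / 2 * dz (cR N) z))
       \<and> (\<forall>Q :: complex \<Rightarrow> real. C2_on \<Omega> Q \<and>
            (\<forall>z\<in>\<Omega>. dz (cR Q) z = h z * dz (cR M) z - (h z)\<^sup>2 / 2 * dz (cR N) z) \<longrightarrow>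
            WD1 \<Omega> (\<lambda>z. 1 / h z) (\<lambda>z. N z / 2) Q \<and>
            (\<forall>z\<in>\<Omega>. 1 / cnj (1 / h z) *
                 (dz (cR (\<lambda>w. N w / 2)) z - complex_of_real ((cmod (1 / h z))\<^sup>2) * dz (cR Q) z)
               = - (dz (cR M) z - complex_of_real (Re (h z)) * dz (cR N) z)))"
proof -
  note S = assms(1)
  have hC2: "C2_on \<Omega> h" and MC2: "C2_on \<Omega> M" and NC2: "C2_on \<Omega> N"
    and hnz: "\<And>z. z \<in> \<Omega> \<Longrightarrow> h z \<noteq> 0" and hCR: "\<And>z. z \<in> \<Omega> \<Longrightarrow> dzbar h z = 0"
    and hyp: "\<And>z. z \<in> \<Omega> \<Longrightarrow> dz (dzbar (cR M)) z = complex_of_real (Re (h z)) * dz (dzbar (cR N)) z"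
    and nd: "\<And>z. z \<in> \<Omega> \<Longrightarrow> dz (cR M) z - complex_of_real (Re (h z)) * dz (cR N) z \<noteq> 0"
    using assms(4) unfolding WD2_def by auto
  have hC1: "C1_on \<Omega> h" using hC2 unfolding C2_on_def by blast
  define hp where "hp = pu h"
  have dhf: "(h has_field_derivative hp z) (at z)" if "z \<in> \<Omega>" for z
    unfolding hp_def using CR_field[OF C1_hd[OF hC1 that] hCR[OF that]] .
  have dh: "(h has_derivative pd (hp z) (\<i> * hp z)) (at z)" if "z \<in> \<Omega>" for z
    using field_hd[OF dhf[OF that]] .
  have holh: "h holomorphic_on \<Omega>"
    unfolding holomorphic_on_def using dhf field_differentiable_at_within field_differentiable_def by blast
  have chp: "continuous_on \<Omega> hp" using hC1 unfolding C1_on_def hp_def by blast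
  have ch: "continuous_on \<Omega> h" using holh holomorphic_on_imp_continuous_on by blast
  define Lap where "Lap f z = pu (pu f) z + pv (pv f) z" for f :: "complex \<Rightarrow> real" and z
  define Mz where "Mz = dz (cR M)"
  define Nz where "Nz = dz (cR N)"
  define MA where "MA z = (of_real (pu (pu M) z) + (- \<i>) * of_real (pu (pv M) z)) / 2" for z
  define MB where "MB z = (of_real (pv (pu M) z) + (- \<i>) * of_real (pv (pv M) z)) / 2" for z
  define NA where "NA z = (of_real (pu (pu N) z) + (- \<i>) * of_real (pu (pv N) z)) / 2" for z
  define NB where "NB z = (of_real (pv (pu N) z) + (- \<i>) * of_real (pv (pv N) z)) / 2" for z
  have dMz: "z \<in> \<Omega> \<Longrightarrow> (Mz has_derivative pd (MA z) (MB z)) (at z)" for z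
    unfolding Mz_def MA_def MB_def by (rule C2_real(1)[OF S MC2])
  have dNz: "z \<in> \<Omega> \<Longrightarrow> (Nz has_derivative pd (NA z) (NB z)) (at z)" for z
    unfolding Nz_def NA_def NB_def by (rule C2_real(1)[OF S NC2])
  have cMz: "continuous_on \<Omega> Mz"
    using dMz by (meson continuous_at_imp_continuous_on has_derivative_continuous)
  have cNz: "continuous_on \<Omega> Nz"
    using dNz by (meson continuous_at_imp_continuous_on has_derivative_continuous)
  note cM = C2_real_cont[OF MC2] and cN = C2_real_cont[OF NC2]
  have cMA: "continuous_on \<Omega> MA" "continuous_on \<Omega> MB" "continuous_on \<Omega> NA" "continuous_on \<Omega> NB"
    unfolding MA_def MB_def NA_def NB_def using cM cN by (auto intro!: continuous_intros)
  define F where "F z = h z * Mz z - (h z)\<^sup>2 / 2 * Nz z" for z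
  define F1 where "F1 z = h z * MA z + hp z * Mz z - (2 * h z * hp z / 2 * Nz z + (h z)\<^sup>2 / 2 * NA z)" for z
  define F2 where "F2 z = h z * MB z + \<i> * hp z * Mz z - (2 * h z * (\<i> * hp z) / 2 * Nz z + (h z)\<^sup>2 / 2 * NB z)" for z
  have dF: "(F has_derivative pd (F1 z) (F2 z)) (at z)" if z: "z \<in> \<Omega>" for z
  proof -
    have dh2: "((\<lambda>w. (h w)\<^sup>2 / 2) has_field_derivative 2 * h z * hp z / 2) (at z)"
      using DERIV_cdivide[OF DERIV_power[OF dhf[OF z], of 2], of 2] by (simp add: power2_eq_square mult.commute)
    have dh2': "((\<lambda>w. (h w)\<^sup>2 / 2) has_derivative pd (2 * h z * hp z / 2) (\<i> * (2 * h z * hp z / 2))) (at z)"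
      using field_hd[OF dh2] .
    have "(F has_derivative (\<lambda>k. (h z * pd (MA z) (MB z) k + pd (hp z) (\<i> * hp z) k * Mz z) -
            ((h z)\<^sup>2 / 2 * pd (NA z) (NB z) k + pd (2 * h z * hp z / 2) (\<i> * (2 * h z * hp z / 2)) k * Nz z))) (at z)"
      unfolding F_def
      by (rule has_derivative_diff[OF has_derivative_mult[OF dh[OF z] dMz[OF z]] has_derivative_mult[OF dh2' dNz[OF z]]])
    from hd_pd'[OF this] show ?thesis unfolding F1_def F2_def by (simp add: algebra_simps)
  qed
  have cF1: "continuous_on \<Omega> F1" unfolding F1_def using ch chp cMz cNz cMA
    by (intro continuous_intros) auto
  have cF2: "continuous_on \<Omega> F2" unfolding F2_def using ch chp cMz cNz cMA
    by (intro continuous_intros) auto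
  have cF: "continuous_on \<Omega> F"
    using dF by (meson continuous_at_imp_continuous_on has_derivative_continuous)
  have key: "F1 z + \<i> * F2 z = of_real ((cmod (h z))\<^sup>2 * Lap N z / 4)" if z: "z \<in> \<Omega>" for z
  proof -
    have sM: "pv (pu M) z = pu (pv M) z" by (rule schwarz[OF S MC2 z])
    have sN: "pv (pu N) z = pu (pv N) z" by (rule schwarz[OF S NC2 z])
    have "complex_of_real (Lap M z / 4) = complex_of_real (Re (h z)) * complex_of_real (Lap N z / 4)"
      using hyp[OF z] unfolding C2_real(3)[OF S MC2 z] C2_real(3)[OF S NC2 z] Lap_def .
    then have LM: "Lap M z = Re (h z) * Lap N z"
      by (metis of_real_eq_iff of_real_mult mult.commute times_divide_eq_right divide_cancel_right zero_neq_numeral)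
    have MAB: "MA z + \<i> * MB z = of_real (Lap M z / 2)"
      unfolding MA_def MB_def Lap_def by (simp add: complex_eq_iff sM)
    have NAB: "NA z + \<i> * NB z = of_real (Lap N z / 2)"
      unfolding NA_def NB_def Lap_def by (simp add: complex_eq_iff sN)
    have "F1 z + \<i> * F2 z = h z * (MA z + \<i> * MB z) - (h z)\<^sup>2 / 2 * (NA z + \<i> * NB z)"
      unfolding F1_def F2_def by (simp add: algebra_simps)
    also have "\<dots> = h z * of_real (Re (h z) * Lap N z / 2) - (h z)\<^sup>2 / 2 * of_real (Lap N z / 2)"
      unfolding MAB NAB LM by simp
    also have "\<dots> = of_real ((cmod (h z))\<^sup>2 * Lap N z / 4)"
      unfolding cmod_power2 by (simp add: complex_eq_iff power2_eq_square algebra_simps add_divide_distrib diff_divide_distrib)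
    finally show ?thesis .
  qed
  have cl: "Im (F1 z) + Re (F2 z) = 0" if z: "z \<in> \<Omega>" for z
  proof -
    have "Im (F1 z + \<i> * F2 z) = 0" unfolding key[OF z] by (rule Im_complex_of_real)
    then show ?thesis by simp
  qed
  obtain Q0 where Q0: "\<And>z. z \<in> \<Omega> \<Longrightarrow> (Q0 has_derivative (\<lambda>k. 2 * Re (F z * k))) (at z)"
    using poincare_sc[OF S assms(3) dF cF1 cF2 cl] by blast
  have part1: "\<exists>Q :: complex \<Rightarrow> real. C2_on \<Omega> Q \<and> (\<forall>z\<in>\<Omega>. dz (cR Q) z = F z)"
  proof (intro exI conjI ballI)
    have dQ0: "(Q0 has_derivative pd (2 * Re (F z)) (-2 * Im (F z))) (at z)" if z: "z \<in> \<Omega>" for z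
    proof -
      have "(\<lambda>k. 2 * Re (F z * k)) = pd (2 * Re (F z)) (-2 * Im (F z))"
        by (rule ext) (simp add: pd_def algebra_simps)
      then show ?thesis using Q0[OF z] by simp
    qed
    have c1: "continuous_on \<Omega> (\<lambda>z. 2 * Re (F z))" "continuous_on \<Omega> (\<lambda>z. -2 * Im (F z))"
      using cF by (auto intro!: continuous_intros)
    note Q0C1 = C1_crit[OF S dQ0 c1]
    have c2: "continuous_on \<Omega> (\<lambda>z. 2 * Re (F1 z))" "continuous_on \<Omega> (\<lambda>z. 2 * Re (F2 z))"
      "continuous_on \<Omega> (\<lambda>z. -2 * Im (F1 z))" "continuous_on \<Omega> (\<lambda>z. -2 * Im (F2 z))"
      using cF1 cF2 by (auto intro!: continuous_intros)
    have a: "C1_on \<Omega> (\<lambda>z. 2 * Re (F z))" using C1_crit(1)[OF S Re_hd(1)[OF dF, of _ 2] c2(1,2)] by blast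
    have b: "C1_on \<Omega> (\<lambda>z. -2 * Im (F z))" using C1_crit(1)[OF S Re_hd(2)[OF dF, of _ "-2"] c2(3,4)] by blast
    have "C1_on \<Omega> (pu Q0)" by (rule C1_cong[OF S a]) (simp add: Q0C1(2))
    moreover have "C1_on \<Omega> (pv Q0)" by (rule C1_cong[OF S b]) (simp add: Q0C1(3))
    ultimately show "C2_on \<Omega> Q0" unfolding C2_on_def using Q0C1(1) by blast
    fix z assume z: "z \<in> \<Omega>"
    show "dz (cR Q0) z = F z" unfolding dz_real(1)[OF dQ0[OF z]] by (simp add: complex_eq_iff)
  qed
  have part2: "WD1 \<Omega> (\<lambda>z. 1 / h z) (\<lambda>z. N z / 2) Q \<and>
            (\<forall>z\<in>\<Omega>. 1 / cnj (1 / h z) *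
                 (dz (cR (\<lambda>w. N w / 2)) z - complex_of_real ((cmod (1 / h z))\<^sup>2) * dz (cR Q) z)
               = - (dz (cR M) z - complex_of_real (Re (h z)) * dz (cR N) z))"
    if Q: "C2_on \<Omega> Q" "\<forall>z\<in>\<Omega>. dz (cR Q) z = F z" for Q
  proof -
    have QC1: "C1_on \<Omega> Q" using Q(1) unfolding C2_on_def by blast
    have NC1: "C1_on \<Omega> N" using NC2 unfolding C2_on_def by blast
    have dzb: "dzbar (cR Q) z = cnj (F z)" if z: "z \<in> \<Omega>" for z
    proof -
      have e: "(of_real (pu Q z) - \<i> * of_real (pv Q z)) / 2 = F z"
        using Q(2) z dz_real(1)[OF C1_hd[OF QC1 z]] by simp
      have "Re ((of_real (pu Q z) - \<i> * of_real (pv Q z)) / 2) = Re (F z)"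
           "Im ((of_real (pu Q z) - \<i> * of_real (pv Q z)) / 2) = Im (F z)" using e by simp_all
      then show ?thesis unfolding dz_real(2)[OF C1_hd[OF QC1 z]] by (simp add: complex_eq_iff)
    qed
    have dzz: "dz (dzbar (cR Q)) z = of_real ((cmod (h z))\<^sup>2 * Lap N z / 8)" if z: "z \<in> \<Omega>" for z
    proof -
      have "dz (dzbar (cR Q)) z = dz (\<lambda>w. cnj (F w)) z"
        unfolding dz_def using pupv_local[OF S z dzb] by simp
      also have "\<dots> = cnj (F1 z + \<i> * F2 z) / 2"
        unfolding dz_def hd_pupv[OF cnj_hd[OF dF[OF z]]] by simp
      also have "\<dots> = of_real ((cmod (h z))\<^sup>2 * Lap N z / 8)" unfolding key[OF z] by simp
      finally show ?thesis .
    qed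
    have holg: "(\<lambda>z. 1 / h z) holomorphic_on \<Omega>"
      using holh hnz by (intro holomorphic_intros) auto
    note gC1 = holo_C1[OF S holg]
    note hN = half_C2[OF S NC2]
    have W1: "WD1 \<Omega> (\<lambda>z. 1 / h z) (\<lambda>z. N z / 2) Q"
      unfolding WD1_def
    proof (intro conjI ballI)
      show "C2_on \<Omega> (\<lambda>z. 1 / h z)" by (rule holo_C2[OF S holg])
      show "C2_on \<Omega> (\<lambda>z. N z / 2)" by (rule hN(1))
      show "C2_on \<Omega> Q" by (rule Q(1))
      fix z assume z: "z \<in> \<Omega>"
      show "1 / h z \<noteq> 0" using hnz[OF z] by simp
      show "dzbar (\<lambda>z. 1 / h z) z = 0" unfolding dzbar_def gC1(2)[OF z] gC1(3)[OF z] by simp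
      have l: "dz (dzbar (cR (\<lambda>z. N z / 2))) z = of_real (Lap N z / 8)"
        unfolding C2_real(3)[OF S hN(1) z] hN(2)[OF z] hN(3)[OF z] Lap_def by simp
      have n: "(cmod (1 / h z))\<^sup>2 * (cmod (h z))\<^sup>2 = 1" using hnz[OF z]
        by (simp add: norm_divide power_divide)
      show "dz (dzbar (cR (\<lambda>z. N z / 2))) z = complex_of_real ((cmod (1 / h z))\<^sup>2) * dz (dzbar (cR Q)) z"
        unfolding l dzz[OF z] of_real_mult[symmetric]
        by (metis (no_types, lifting) n mult.assoc mult_1 times_divide_eq_right)
      have id: "1 / cnj (1 / h z) *
                 (dz (cR (\<lambda>w. N w / 2)) z - complex_of_real ((cmod (1 / h z))\<^sup>2) * dz (cR Q) z)
               = - (Mz z - complex_of_real (Re (h z)) * Nz z)"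
      proof -
        have e1: "dz (cR (\<lambda>w. N w / 2)) z = Nz z / 2"
          unfolding Nz_def dz_real(1)[OF half_hd[OF C1_hd[OF NC1 z]]] dz_real(1)[OF C1_hd[OF NC1 z]]
          by (simp add: complex_eq_iff)
        have e2: "dz (cR Q) z = h z * Mz z - (h z)\<^sup>2 / 2 * Nz z" using Q(2) z by (simp add: F_def)
        show ?thesis unfolding e1 e2 by (rule alg_id[OF hnz[OF z]])
      qed
      show "dz (cR (\<lambda>z. N z / 2)) z - complex_of_real ((cmod (1 / h z))\<^sup>2) * dz (cR Q) z \<noteq> 0"
      proof
        assume "dz (cR (\<lambda>z. N z / 2)) z - complex_of_real ((cmod (1 / h z))\<^sup>2) * dz (cR Q) z = 0"
        then have "Mz z - complex_of_real (Re (h z)) * Nz z = 0" using id by simp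
        then show False using nd[OF z] unfolding Mz_def Nz_def by simp
      qed
    qed
    show ?thesis
    proof (intro conjI ballI W1)
      fix z assume z: "z \<in> \<Omega>"
      have e1: "dz (cR (\<lambda>w. N w / 2)) z = Nz z / 2"
        unfolding Nz_def dz_real(1)[OF half_hd[OF C1_hd[OF NC1 z]]] dz_real(1)[OF C1_hd[OF NC1 z]]
        by (simp add: complex_eq_iff)
      have e2: "dz (cR Q) z = h z * Mz z - (h z)\<^sup>2 / 2 * Nz z" using Q(2) z by (simp add: F_def)
      show "1 / cnj (1 / h z) *
                 (dz (cR (\<lambda>w. N w / 2)) z - complex_of_real ((cmod (1 / h z))\<^sup>2) * dz (cR Q) z)
               = - (dz (cR M) z - complex_of_real (Re (h z)) * dz (cR N) z)"
        unfolding e1 e2 using alg_id[OF hnz[OF z]] unfolding Mz_def Nz_def .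
    qed
  qed
  show ?thesis using part1 part2 unfolding F_def Mz_def Nz_def by blast
qed


end
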